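(* Let $\mathcal H$ be an infinite-dimensional separable Hilbert space with orthonormal basis $\{|\varphi_i\rangle\}_{i=1}^\infty$, and let $\big[\langle\varphi_i|\hat\varrho|\varphi_j\rangle\big]_{i,j=1}^{\infty}$ be an infinite complex matrix. This matrix represents a quantum state (i.e. is the matrix of a density operator in this basis) if and only if: (i) $\sum_{i,j=1}^{\infty}|\langle\varphi_i|\hat\varrho|\varphi_j\rangle|^2\le 1$; (ii) $\langle\varphi_i|\hat\varrho|\varphi_j\rangle=\overline{\langle\varphi_j|\hat\varrho|\varphi_i\rangle}$ for all $1\le i,j<\infty$; (iii) for every natural number $n$, \[\sum_{k=0}^{n}(-1)^k\binom{n}{k}\sum_{i=1}^{\infty}\langle\varphi_i|\hat\varrho^{k+1}|\varphi_i\rangle\ge 0;\] (iv) $\sum_{i=1}^{\infty}\langle\varphi_i|\hat\varrho|\varphi_i\rangle=1$.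
   Context: A density operator on $\mathcal H$ is an operator $\hat\varrho:\mathcal H\to\mathcal H$ defined on all of $\mathcal H$ which is positive, self-adjoint, and has trace $1$. When condition (i) holds, the matrix defines a unique Hilbert–Schmidt operator $\hat\varrho$ on $\mathcal H$ with the given matrix elements; powers refer to this operator. *)

theory Defs
  imports "HOL-Analysis.Analysis" "HOL-Library.Complex_Order"
begin

text \<open>The separable infinite-dimensional Hilbert space is modelled concretely as
  l2(nat): square-summable complex sequences, with orthonormal basis given by the
  unit vectors (index i = 0,1,2,... corresponds to phi_(i+1)).\<close>

definition l2 :: "(nat \<Rightarrow> complex) set" where
  "l2 = {x. summable (\<lambda>n. (cmod (x n))\<^sup>2)}"

definition l2_inner :: "(nat \<Rightarrow> complex) \<Rightarrow> (nat \<Rightarrow> complex) \<Rightarrow> complex" where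
  "l2_inner x y = (\<Sum>n. cnj (x n) * y n)"

definition basis_vec :: "nat \<Rightarrow> nat \<Rightarrow> complex" where
  "basis_vec i = (\<lambda>j. if j = i then 1 else 0)"

definition density_operator :: "((nat \<Rightarrow> complex) \<Rightarrow> (nat \<Rightarrow> complex)) \<Rightarrow> bool" where
  "density_operator A \<longleftrightarrow>
     (\<forall>x\<in>l2. A x \<in> l2) \<and>
     (\<forall>x\<in>l2. \<forall>y\<in>l2. \<forall>a b. A (\<lambda>n. a * x n + b * y n) = (\<lambda>n. a * A x n + b * A y n)) \<and>
     (\<forall>x\<in>l2. \<forall>y\<in>l2. l2_inner (A x) y = l2_inner x (A y)) \<and>
     (\<forall>x\<in>l2. 0 \<le> l2_inner x (A x)) \<and>
     (\<lambda>i. l2_inner (basis_vec i) (A (basis_vec i))) sums 1"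

definition represents_state :: "(nat \<Rightarrow> nat \<Rightarrow> complex) \<Rightarrow> bool" where
  "represents_state M \<longleftrightarrow>
     (\<exists>A. density_operator A \<and>
          (\<forall>i j. l2_inner (basis_vec i) (A (basis_vec j)) = M i j))"

definition matrix_op :: "(nat \<Rightarrow> nat \<Rightarrow> complex) \<Rightarrow> (nat \<Rightarrow> complex) \<Rightarrow> (nat \<Rightarrow> complex)" where
  "matrix_op M x = (\<lambda>i. \<Sum>j. M i j * x j)"

definition pow_diag :: "(nat \<Rightarrow> nat \<Rightarrow> complex) \<Rightarrow> nat \<Rightarrow> nat \<Rightarrow> complex" where
  "pow_diag M k i = l2_inner (basis_vec i) ((matrix_op M ^^ k) (basis_vec i))"

end

theory Submission
  imports Defs
begin


lemma two_mul_le: "2 * ((p::real) * q) \<le> p\<^sup>2 + q\<^sup>2"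
proof -
  have "0 \<le> (p - q)\<^sup>2" by simp
  moreover have "(p - q)\<^sup>2 = p\<^sup>2 - 2 * (p * q) + q\<^sup>2" by algebra
  ultimately show ?thesis by linarith
qed

lemma sq_sum_le: "((p::real) + q)\<^sup>2 \<le> 2 * p\<^sup>2 + 2 * q\<^sup>2"
proof -
  have "(p + q)\<^sup>2 = p\<^sup>2 + 2 * (p * q) + q\<^sup>2" by algebra
  with two_mul_le[of p q] show ?thesis by linarith
qed

definition nrm2 :: "(nat \<Rightarrow> complex) \<Rightarrow> real" where
  "nrm2 x = (\<Sum>n. (cmod (x n))\<^sup>2)"

lemma l2_iff: "x \<in> l2 \<longleftrightarrow> summable (\<lambda>n. (cmod (x n))\<^sup>2)"
  by (simp add: l2_def)

lemma nrm2_nonneg: "x \<in> l2 \<Longrightarrow> 0 \<le> nrm2 x"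
  unfolding nrm2_def l2_iff by (simp add: suminf_nonneg)

lemma l2_comb:
  assumes "x \<in> l2" "y \<in> l2"
  shows "(\<lambda>n. a * x n + b * y n) \<in> l2"
proof -
  have s: "summable (\<lambda>n. 2 * (cmod a)\<^sup>2 * (cmod (x n))\<^sup>2 + 2 * (cmod b)\<^sup>2 * (cmod (y n))\<^sup>2)"
    using assms unfolding l2_iff by (intro summable_add summable_mult)
  show ?thesis unfolding l2_iff
  proof (rule summable_comparison_test'[OF s])
    fix n
    have "cmod (a * x n + b * y n) \<le> cmod a * cmod (x n) + cmod b * cmod (y n)"
      by (metis norm_mult norm_triangle_ineq)
    hence "(cmod (a * x n + b * y n))\<^sup>2 \<le> (cmod a * cmod (x n) + cmod b * cmod (y n))\<^sup>2"
      by (simp add: power_mono)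
    also have "\<dots> \<le> 2 * (cmod a)\<^sup>2 * (cmod (x n))\<^sup>2 + 2 * (cmod b)\<^sup>2 * (cmod (y n))\<^sup>2"
      using sq_sum_le[of "cmod a * cmod (x n)" "cmod b * cmod (y n)"] by (simp add: power_mult_distrib)
    finally show "norm ((cmod (a * x n + b * y n))\<^sup>2) \<le> 2 * (cmod a)\<^sup>2 * (cmod (x n))\<^sup>2 + 2 * (cmod b)\<^sup>2 * (cmod (y n))\<^sup>2"
      by simp
  qed
qed

lemma l2_diff: "x \<in> l2 \<Longrightarrow> y \<in> l2 \<Longrightarrow> (\<lambda>n. x n - y n) \<in> l2"
  using l2_comb[of x y 1 "-1"] by simp

lemma l2_scale: "x \<in> l2 \<Longrightarrow> (\<lambda>n. a * x n) \<in> l2"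
  using l2_comb[of x x a 0] by simp

lemma l2_zero: "(\<lambda>n. 0) \<in> l2"
  by (simp add: l2_iff)

lemma inner_abs_summable:
  assumes "x \<in> l2" "y \<in> l2"
  shows "summable (\<lambda>n. cmod (cnj (x n) * y n))"
proof (rule summable_comparison_test'[where g="\<lambda>n. (cmod (x n))\<^sup>2 + (cmod (y n))\<^sup>2"])
  show "summable (\<lambda>n. (cmod (x n))\<^sup>2 + (cmod (y n))\<^sup>2)" using assms by (simp add: l2_iff summable_add)
  fix n
  have "cmod (x n) * cmod (y n) \<le> (cmod (x n))\<^sup>2 + (cmod (y n))\<^sup>2"
    using two_mul_le[of "cmod (x n)" "cmod (y n)"] mult_nonneg_nonneg[OF norm_ge_zero norm_ge_zero, of "x n" "y n"] by linarith
  thus "norm (cmod (cnj (x n) * y n)) \<le> (cmod (x n))\<^sup>2 + (cmod (y n))\<^sup>2"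
    by (simp add: norm_mult)
qed

lemma inner_summable:
  "x \<in> l2 \<Longrightarrow> y \<in> l2 \<Longrightarrow> summable (\<lambda>n. cnj (x n) * y n)"
  by (rule summable_norm_cancel[OF inner_abs_summable])

lemma inner_sums: "x \<in> l2 \<Longrightarrow> y \<in> l2 \<Longrightarrow> (\<lambda>n. cnj (x n) * y n) sums l2_inner x y"
  unfolding l2_inner_def using inner_summable summable_sums by blast

lemma inner_comb_right:
  assumes "w \<in> l2" "x \<in> l2" "y \<in> l2"
  shows "l2_inner w (\<lambda>n. a * x n + b * y n) = a * l2_inner w x + b * l2_inner w y"
proof -
  have "(\<lambda>n. a * (cnj (w n) * x n) + b * (cnj (w n) * y n)) sums (a * l2_inner w x + b * l2_inner w y)"
    using assms by (intro sums_add sums_mult inner_sums)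
  thus ?thesis unfolding l2_inner_def by (simp add: sums_iff algebra_simps)
qed

lemma inner_cnj:
  assumes "x \<in> l2" "y \<in> l2"
  shows "l2_inner y x = cnj (l2_inner x y)"
proof -
  have "(\<lambda>n. cnj (x n) * y n) sums l2_inner x y" using assms by (rule inner_sums)
  hence "(\<lambda>n. cnj (cnj (x n) * y n)) sums cnj (l2_inner x y)" by (simp only: sums_cnj)
  hence "(\<lambda>n. cnj (y n) * x n) sums cnj (l2_inner x y)" by (simp add: mult.commute)
  thus ?thesis by (simp add: l2_inner_def sums_iff)
qed


lemma inner_comb_left:
  assumes "w \<in> l2" "x \<in> l2" "y \<in> l2"
  shows "l2_inner (\<lambda>n. a * x n + b * y n) w = cnj a * l2_inner x w + cnj b * l2_inner y w"
proof -
  have "l2_inner (\<lambda>n. a * x n + b * y n) w = cnj (l2_inner w (\<lambda>n. a * x n + b * y n))"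
    by (rule inner_cnj[OF assms(1) l2_comb[OF assms(2,3)]])
  also have "\<dots> = cnj a * cnj (l2_inner w x) + cnj b * cnj (l2_inner w y)"
    using assms by (simp add: inner_comb_right)
  also have "\<dots> = cnj a * l2_inner x w + cnj b * l2_inner y w"
    using inner_cnj[OF assms(1,2)] inner_cnj[OF assms(1,3)] by simp
  finally show ?thesis .
qed

lemma inner_diff_right:
  "w \<in> l2 \<Longrightarrow> x \<in> l2 \<Longrightarrow> y \<in> l2 \<Longrightarrow> l2_inner w (\<lambda>n. x n - s * y n) = l2_inner w x - s * l2_inner w y"
  using inner_comb_right[of w x y 1 "-s"] by simp

lemma inner_diff_left:
  "w \<in> l2 \<Longrightarrow> x \<in> l2 \<Longrightarrow> y \<in> l2 \<Longrightarrow> l2_inner (\<lambda>n. x n - s * y n) w = l2_inner x w - cnj s * l2_inner y w"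
  using inner_comb_left[of w x y 1 "-s"] by simp

lemma l2_diff_scale: "x \<in> l2 \<Longrightarrow> y \<in> l2 \<Longrightarrow> (\<lambda>n. x n - s * y n) \<in> l2"
  using l2_comb[of x y 1 "-s"] by simp

lemma inner_self: "x \<in> l2 \<Longrightarrow> l2_inner x x = of_real (nrm2 x)"
proof -
  assume x: "x \<in> l2"
  have "(\<lambda>n. (cmod (x n))\<^sup>2) sums nrm2 x" using x unfolding l2_iff nrm2_def by (rule summable_sums)
  hence "(\<lambda>n. complex_of_real ((cmod (x n))\<^sup>2)) sums of_real (nrm2 x)" by (simp only: sums_of_real_iff)
  moreover have "\<And>n. complex_of_real ((cmod (x n))\<^sup>2) = cnj (x n) * x n"
    by (metis complex_norm_square mult.commute)
  ultimately have "(\<lambda>n. cnj (x n) * x n) sums of_real (nrm2 x)" by simp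
  thus ?thesis by (simp add: l2_inner_def sums_iff)
qed

lemma basis_l2: "basis_vec i \<in> l2"
proof -
  have "(\<lambda>n. (cmod (basis_vec i n))\<^sup>2) = (\<lambda>n. if n = i then 1 else 0)"
    by (auto simp: basis_vec_def)
  thus ?thesis unfolding l2_iff by (simp add: summable_single)
qed

lemma inner_basis: "l2_inner (basis_vec i) v = v i"
proof -
  have "(\<lambda>n. cnj (basis_vec i n) * v n) = (\<lambda>n. if n = i then v i else 0)"
    by (auto simp: basis_vec_def)
  thus ?thesis unfolding l2_inner_def using sums_single[of i "\<lambda>_. v i"] by (simp add: sums_iff)
qed

lemma inner_basis_right: "l2_inner v (basis_vec i) = cnj (v i)"
proof -
  have "(\<lambda>n. cnj (v n) * basis_vec i n) = (\<lambda>n. if n = i then cnj (v i) else 0)"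
    by (auto simp: basis_vec_def)
  thus ?thesis unfolding l2_inner_def using sums_single[of i "\<lambda>_. cnj (v i)"] by (simp add: sums_iff)
qed

definition lin_op :: "((nat \<Rightarrow> complex) \<Rightarrow> (nat \<Rightarrow> complex)) \<Rightarrow> bool" where
  "lin_op B \<longleftrightarrow> (\<forall>x\<in>l2. B x \<in> l2) \<and>
     (\<forall>x\<in>l2. \<forall>y\<in>l2. \<forall>a b. B (\<lambda>n. a * x n + b * y n) = (\<lambda>n. a * B x n + b * B y n))"

definition sa_op :: "((nat \<Rightarrow> complex) \<Rightarrow> (nat \<Rightarrow> complex)) \<Rightarrow> bool" where
  "sa_op B \<longleftrightarrow> lin_op B \<and> (\<forall>x\<in>l2. \<forall>y\<in>l2. l2_inner (B x) y = l2_inner x (B y))"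

definition psd :: "((nat \<Rightarrow> complex) \<Rightarrow> (nat \<Rightarrow> complex)) \<Rightarrow> bool" where
  "psd B \<longleftrightarrow> (\<forall>x\<in>l2. 0 \<le> l2_inner x (B x))"

lemma lin_opD: "lin_op B \<Longrightarrow> x \<in> l2 \<Longrightarrow> B x \<in> l2"
  "lin_op B \<Longrightarrow> x \<in> l2 \<Longrightarrow> y \<in> l2 \<Longrightarrow> B (\<lambda>n. a * x n + b * y n) = (\<lambda>n. a * B x n + b * B y n)"
  unfolding lin_op_def by blast+

lemma sa_opD: "sa_op B \<Longrightarrow> lin_op B"
  "sa_op B \<Longrightarrow> x \<in> l2 \<Longrightarrow> y \<in> l2 \<Longrightarrow> l2_inner (B x) y = l2_inner x (B y)"
  unfolding sa_op_def by blast+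

lemma lin_op_diff: "lin_op B \<Longrightarrow> x \<in> l2 \<Longrightarrow> y \<in> l2 \<Longrightarrow> B (\<lambda>n. x n - y n) = (\<lambda>n. B x n - B y n)"
  using lin_opD(2)[of B x y 1 "-1"] by simp

lemma lin_op_diff_scale: "lin_op B \<Longrightarrow> x \<in> l2 \<Longrightarrow> y \<in> l2 \<Longrightarrow> B (\<lambda>n. x n - s * y n) = (\<lambda>n. B x n - s * B y n)"
  using lin_opD(2)[of B x y 1 "-s"] by simp

lemma lin_op_id: "lin_op (\<lambda>x. x)"
  unfolding lin_op_def by simp

lemma sa_op_id: "sa_op (\<lambda>x. x)"
  unfolding sa_op_def using lin_op_id by simp

lemma psd_id: "psd (\<lambda>x. x)"
  unfolding psd_def by (simp add: inner_self nrm2_nonneg less_eq_complex_def)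

lemma quad_nonneg_bound:
  fixes a p r :: real
  assumes "\<And>t. 0 \<le> a - 2 * t * p + t\<^sup>2 * p * r" "0 \<le> p" "0 \<le> a" "0 \<le> r"
  shows "p \<le> a * r"
proof (cases "p = 0")
  case True thus ?thesis using assms by simp
next
  case False
  hence pp: "p > 0" using assms by simp
  show ?thesis
  proof (cases "r = 0")
    case True
    have "0 \<le> a - 2 * ((a + 1) / (2 * p)) * p + ((a + 1) / (2 * p))\<^sup>2 * p * r" by (rule assms(1))
    also have "\<dots> = -1" using pp True by (simp add: field_simps)
    finally show ?thesis by simp
  next
    case False
    hence rp: "r > 0" using assms by simp
    have "0 \<le> a - 2 * (1 / r) * p + (1 / r)\<^sup>2 * p * r" by (rule assms(1))
    also have "\<dots> = a - p / r" using rp by (simp add: field_simps power2_eq_square)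
    finally have "p / r \<le> a" by simp
    thus ?thesis using rp by (simp add: field_simps)
  qed
qed

lemma form_cs:
  assumes B: "sa_op B" "psd B" and u: "u \<in> l2" and v: "v \<in> l2"
  shows "(cmod (l2_inner u (B v)))\<^sup>2 \<le> Re (l2_inner u (B u)) * Re (l2_inner v (B v))"
proof -
  have lin: "lin_op B" using B by (simp add: sa_opD)
  have Bu: "B u \<in> l2" and Bv: "B v \<in> l2" using lin u v by (simp_all add: lin_opD)
  define c where "c = l2_inner v (B u)"
  have cuv: "l2_inner u (B v) = cnj c"
  proof -
    have "l2_inner u (B v) = l2_inner (B u) v" using B u v by (simp add: sa_opD)
    also have "\<dots> = cnj c" unfolding c_def using v Bu by (rule inner_cnj)
    finally show ?thesis .
  qed
  define Qu where "Qu = l2_inner u (B u)"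
  define Qv where "Qv = l2_inner v (B v)"
  have "0 \<le> Re Qu" "0 \<le> Re Qv" using B u v unfolding psd_def Qu_def Qv_def less_eq_complex_def by auto
  have key: "0 \<le> Re Qu - 2 * t * (cmod c)\<^sup>2 + t\<^sup>2 * (cmod c)\<^sup>2 * Re Qv" for t :: real
  proof -
    define s where "s = complex_of_real t * c"
    define w where "w = (\<lambda>n. u n - s * v n)"
    have w: "w \<in> l2" unfolding w_def using u v by (rule l2_diff_scale)
    have Bw: "B w = (\<lambda>n. B u n - s * B v n)" unfolding w_def using lin u v by (rule lin_op_diff_scale)
    have "l2_inner w (B w) = l2_inner w (B u) - s * l2_inner w (B v)"
      unfolding Bw using w Bu Bv by (rule inner_diff_right)
    also have "l2_inner w (B u) = Qu - cnj s * c"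
      unfolding w_def Qu_def c_def using Bu u v by (rule inner_diff_left)
    also have "l2_inner w (B v) = cnj c - cnj s * Qv"
      unfolding w_def Qv_def cuv[symmetric] using Bv u v by (rule inner_diff_left)
    finally have e: "l2_inner w (B w) = Qu - cnj s * c - s * (cnj c - cnj s * Qv)" .
    have cc: "c * cnj c = complex_of_real ((cmod c)\<^sup>2)" by (rule complex_norm_square[symmetric])
    have "l2_inner w (B w) = Qu - 2 * complex_of_real t * (c * cnj c) + (complex_of_real t)\<^sup>2 * (c * cnj c) * Qv"
      unfolding e s_def by (simp add: algebra_simps power2_eq_square)
    hence "Re (l2_inner w (B w)) = Re Qu - 2 * t * (cmod c)\<^sup>2 + t\<^sup>2 * (cmod c)\<^sup>2 * Re Qv"
      unfolding cc by (simp add: power2_eq_square)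
    moreover have "0 \<le> Re (l2_inner w (B w))" using B w unfolding psd_def less_eq_complex_def by auto
    ultimately show ?thesis by simp
  qed
  have "(cmod c)\<^sup>2 \<le> Re Qu * Re Qv"
    by (rule quad_nonneg_bound) (use key \<open>0 \<le> Re Qu\<close> \<open>0 \<le> Re Qv\<close> in auto)
  thus ?thesis unfolding cuv Qu_def Qv_def by simp
qed

lemma cs: "u \<in> l2 \<Longrightarrow> v \<in> l2 \<Longrightarrow> (cmod (l2_inner u v))\<^sup>2 \<le> nrm2 u * nrm2 v"
  using form_cs[OF sa_op_id psd_id, of u v] by (simp add: inner_self)


lemma lin_op_comp: "lin_op B \<Longrightarrow> lin_op D \<Longrightarrow> lin_op (\<lambda>x. B (D x))"
  unfolding lin_op_def by simp

lemma funpow_Suc_fun: "(B ^^ Suc n) = (\<lambda>x. B ((B ^^ n) x))"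
  by (simp add: fun_eq_iff)

lemma funpow_Suc_fun': "(B ^^ Suc n) x = (B ^^ n) (B x)"
  by (simp only: funpow_Suc_right o_apply)

lemma lin_op_pow: "lin_op B \<Longrightarrow> lin_op (B ^^ n)"
proof (induction n)
  case 0 show ?case using lin_op_id by simp
next
  case (Suc n) show ?case using lin_op_comp[OF Suc.prems Suc.IH[OF Suc.prems]] unfolding funpow_Suc_fun .
qed

lemma pow_l2: "lin_op B \<Longrightarrow> x \<in> l2 \<Longrightarrow> (B ^^ n) x \<in> l2"
  using lin_op_pow lin_opD(1) by blast

lemma sa_op_pow: "sa_op B \<Longrightarrow> sa_op (B ^^ n)"
proof (induction n)
  case 0 thus ?case using sa_op_id by (simp add: id_def)
next
  case (Suc n)
  have lin: "lin_op B" using Suc.prems by (rule sa_opD)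
  show ?case unfolding sa_op_def
  proof (intro conjI ballI)
    show "lin_op (B ^^ Suc n)" using lin by (rule lin_op_pow)
    fix x y assume x: "x \<in> l2" and y: "y \<in> l2"
    have "l2_inner ((B ^^ Suc n) x) y = l2_inner (B ((B ^^ n) x)) y" by simp
    also have "\<dots> = l2_inner ((B ^^ n) x) (B y)" using Suc.prems pow_l2[OF lin x] y by (simp add: sa_opD)
    also have "\<dots> = l2_inner x ((B ^^ n) (B y))" using Suc.IH[OF Suc.prems] x lin_opD(1)[OF lin y] by (simp add: sa_opD)
    also have "\<dots> = l2_inner x ((B ^^ Suc n) y)" by (simp only: funpow_Suc_fun')
    finally show "l2_inner ((B ^^ Suc n) x) y = l2_inner x ((B ^^ Suc n) y)" .
  qed
qed

definition Cop :: "((nat \<Rightarrow> complex) \<Rightarrow> (nat \<Rightarrow> complex)) \<Rightarrow> (nat \<Rightarrow> complex) \<Rightarrow> (nat \<Rightarrow> complex)" where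
  "Cop A = (\<lambda>x n. x n - A x n)"

lemma lin_op_Cop: "lin_op A \<Longrightarrow> lin_op (Cop A)"
  unfolding lin_op_def Cop_def by (auto simp: l2_diff fun_eq_iff algebra_simps)

lemma sa_op_Cop: assumes "sa_op A" shows "sa_op (Cop A)"
proof -
  have lin: "lin_op A" using assms by (rule sa_opD)
  show ?thesis unfolding sa_op_def
  proof (intro conjI ballI)
    show "lin_op (Cop A)" using lin by (rule lin_op_Cop)
    fix x y assume x: "x \<in> l2" and y: "y \<in> l2"
    have Ax: "A x \<in> l2" and Ay: "A y \<in> l2" using lin x y by (simp_all add: lin_opD)
    have "l2_inner (Cop A x) y = l2_inner x y - l2_inner (A x) y"
      unfolding Cop_def using inner_diff_left[OF y x Ax, of 1] by simp
    also have "\<dots> = l2_inner x y - l2_inner x (A y)" using assms x y by (simp add: sa_opD)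
    also have "\<dots> = l2_inner x (Cop A y)"
      unfolding Cop_def using inner_diff_right[OF x y Ay, of 1] by simp
    finally show "l2_inner (Cop A x) y = l2_inner x (Cop A y)" .
  qed
qed

lemma Cop_commute: "lin_op A \<Longrightarrow> x \<in> l2 \<Longrightarrow> Cop A (A x) = A (Cop A x)"
  unfolding Cop_def by (simp add: lin_op_diff lin_opD)

lemma Cop_pow_commute: assumes "lin_op A" "x \<in> l2" shows "(Cop A ^^ n) (A x) = A ((Cop A ^^ n) x)"
proof (induction n)
  case 0 thus ?case by simp
next
  case (Suc n)
  have "(Cop A ^^ Suc n) (A x) = Cop A (A ((Cop A ^^ n) x))" by (simp add: Suc.IH)
  also have "\<dots> = A (Cop A ((Cop A ^^ n) x))"
    using assms pow_l2[OF lin_op_Cop[OF assms(1)] assms(2)] by (simp add: Cop_commute)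
  finally show ?case by simp
qed

lemma inner_pow_split:
  assumes "sa_op B" "x \<in> l2" "y \<in> l2"
  shows "l2_inner x ((B ^^ (a + b)) y) = l2_inner ((B ^^ a) x) ((B ^^ b) y)"
proof -
  have lin: "lin_op B" using assms(1) by (rule sa_opD)
  have "(B ^^ (a + b)) y = (B ^^ a) ((B ^^ b) y)" by (simp add: funpow_add)
  thus ?thesis using sa_op_pow[OF assms(1), of a] assms pow_l2[OF lin assms(3), of b]
    by (simp add: sa_opD)
qed

lemma inner_real_sa: assumes "sa_op B" "x \<in> l2" shows "Im (l2_inner x (B x)) = 0"
proof -
  have Bx: "B x \<in> l2" using assms by (simp add: sa_opD lin_opD)
  have "l2_inner x (B x) = l2_inner (B x) x" using assms by (simp add: sa_opD)
  also have "\<dots> = cnj (l2_inner x (B x))" using assms(2) Bx by (rule inner_cnj)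
  finally have "l2_inner x (B x) = cnj (l2_inner x (B x))" .
  hence "Im (l2_inner x (B x)) = Im (cnj (l2_inner x (B x)))" by simp
  thus ?thesis by simp
qed

lemma psd_pow: assumes "sa_op B" "psd B" shows "psd (B ^^ n)"
  unfolding psd_def
proof
  fix x assume x: "x \<in> l2"
  have lin: "lin_op B" using assms(1) by (rule sa_opD)
  obtain m where "n = m + m \<or> n = m + Suc m"
  proof (cases "even n")
    case True then obtain m where "n = 2 * m" by (rule evenE)
    thus ?thesis using that[of m] by simp
  next
    case False then obtain m where "n = 2 * m + 1" by (rule oddE)
    thus ?thesis using that[of m] by simp
  qed
  thus "0 \<le> l2_inner x ((B ^^ n) x)"
  proof
    assume n: "n = m + m"
    have "l2_inner x ((B ^^ n) x) = l2_inner ((B ^^ m) x) ((B ^^ m) x)"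
      unfolding n using assms(1) x x by (rule inner_pow_split)
    also have "\<dots> = of_real (nrm2 ((B ^^ m) x))" using pow_l2[OF lin x] by (rule inner_self)
    finally show ?thesis using nrm2_nonneg[OF pow_l2[OF lin x]] by (simp add: less_eq_complex_def)
  next
    assume n: "n = m + Suc m"
    have "l2_inner x ((B ^^ n) x) = l2_inner ((B ^^ m) x) ((B ^^ Suc m) x)"
      unfolding n using assms(1) x x by (rule inner_pow_split)
    also have "\<dots> = l2_inner ((B ^^ m) x) (B ((B ^^ m) x))" by simp
    finally show ?thesis using assms(2) pow_l2[OF lin x] unfolding psd_def by simp
  qed
qed

definition bnd :: "((nat \<Rightarrow> complex) \<Rightarrow> (nat \<Rightarrow> complex)) \<Rightarrow> bool" where
  "bnd B \<longleftrightarrow> (\<forall>x\<in>l2. nrm2 (B x) \<le> nrm2 x)"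

lemma cs_le: assumes "x \<in> l2" "y \<in> l2" "nrm2 y \<le> nrm2 x"
  shows "cmod (l2_inner x y) \<le> nrm2 x"
proof -
  have "(cmod (l2_inner x y))\<^sup>2 \<le> nrm2 x * nrm2 y" using assms by (simp add: cs)
  also have "\<dots> \<le> (nrm2 x)\<^sup>2" using mult_left_mono[OF assms(3) nrm2_nonneg[OF assms(1)]] by (simp add: power2_eq_square)
  finally show ?thesis using power2_le_imp_le nrm2_nonneg[OF assms(1)] by blast
qed

lemma psd_Cop: assumes "sa_op A" "bnd A" shows "psd (Cop A)"
  unfolding psd_def
proof
  fix x assume x: "x \<in> l2"
  have Ax: "A x \<in> l2" using assms x by (simp add: sa_opD lin_opD)
  have e: "l2_inner x (Cop A x) = of_real (nrm2 x) - l2_inner x (A x)"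
    unfolding Cop_def using inner_diff_right[OF x x Ax, of 1] inner_self[OF x] by simp
  have "cmod (l2_inner x (A x)) \<le> nrm2 x" using x Ax assms(2) unfolding bnd_def by (simp add: cs_le)
  hence "Re (l2_inner x (A x)) \<le> nrm2 x" using complex_Re_le_cmod[of "l2_inner x (A x)"] by linarith
  moreover have "Im (l2_inner x (A x)) = 0" using assms(1) x by (rule inner_real_sa)
  ultimately show "0 \<le> l2_inner x (Cop A x)" unfolding e by (simp add: less_eq_complex_def)
qed



lemma pascal_sum:
  fixes f :: "nat \<Rightarrow> complex"
  shows "(\<Sum>k\<le>Suc n. (-1) ^ k * of_nat (Suc n choose k) * f k) =
         (\<Sum>k\<le>n. (-1) ^ k * of_nat (n choose k) * f k) - (\<Sum>k\<le>n. (-1) ^ k * of_nat (n choose k) * f (Suc k))"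
proof -
  have "(\<Sum>k\<le>Suc n. (-1) ^ k * of_nat (Suc n choose k) * f k) =
        f 0 + (\<Sum>k\<le>n. (-1) ^ Suc k * of_nat (Suc n choose Suc k) * f (Suc k))"
    by (subst sum.atMost_Suc_shift) simp
  also have "\<dots> = f 0 + (\<Sum>k\<le>n. (-1) ^ Suc k * of_nat (n choose Suc k) * f (Suc k))
                 - (\<Sum>k\<le>n. (-1) ^ k * of_nat (n choose k) * f (Suc k))"
  proof -
    have "\<And>k. (-1) ^ Suc k * of_nat (Suc n choose Suc k) * f (Suc k) =
       (-1) ^ Suc k * of_nat (n choose Suc k) * f (Suc k) - (-1) ^ k * of_nat (n choose k) * f (Suc k)"
      by (simp add: algebra_simps)
    hence "(\<Sum>k\<le>n. (-1) ^ Suc k * of_nat (Suc n choose Suc k) * f (Suc k)) =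
       (\<Sum>k\<le>n. (-1) ^ Suc k * of_nat (n choose Suc k) * f (Suc k)) - (\<Sum>k\<le>n. (-1) ^ k * of_nat (n choose k) * f (Suc k))"
      by (simp only: sum_subtractf)
    thus ?thesis by simp
  qed
  also have "f 0 + (\<Sum>k\<le>n. (-1) ^ Suc k * of_nat (n choose Suc k) * f (Suc k)) =
             (\<Sum>k\<le>Suc n. (-1) ^ k * of_nat (n choose k) * f k)"
    by (subst sum.atMost_Suc_shift) simp
  also have "\<dots> = (\<Sum>k\<le>n. (-1) ^ k * of_nat (n choose k) * f k)"
    by simp
  finally show ?thesis .
qed

lemma binom_op:
  assumes A: "lin_op A"
  shows "x \<in> l2 \<Longrightarrow> (A ^^ m) ((Cop A ^^ n) x) =
           (\<lambda>j. \<Sum>k\<le>n. (-1) ^ k * of_nat (n choose k) * (A ^^ (k + m)) x j)"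
proof (induction n arbitrary: m x)
  case 0 thus ?case by simp
next
  case (Suc n)
  have C: "lin_op (Cop A)" using A by (rule lin_op_Cop)
  have Ax: "A x \<in> l2" using A Suc.prems by (rule lin_opD)
  have "(Cop A ^^ Suc n) x = (Cop A ^^ n) (\<lambda>j. x j - A x j)"
    by (simp only: funpow_Suc_fun') (simp add: Cop_def)
  also have "\<dots> = (\<lambda>j. (Cop A ^^ n) x j - (Cop A ^^ n) (A x) j)"
    using lin_op_pow[OF C] Suc.prems Ax by (rule lin_op_diff)
  finally have e1: "(Cop A ^^ Suc n) x = (\<lambda>j. (Cop A ^^ n) x j - (Cop A ^^ n) (A x) j)" .
  have "(A ^^ m) ((Cop A ^^ Suc n) x) = (\<lambda>j. (A ^^ m) ((Cop A ^^ n) x) j - (A ^^ m) ((Cop A ^^ n) (A x)) j)"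
    unfolding e1 using lin_op_pow[OF A] pow_l2[OF C Suc.prems] pow_l2[OF C Ax] by (rule lin_op_diff)
  also have "\<dots> = (\<lambda>j. (\<Sum>k\<le>n. (-1) ^ k * of_nat (n choose k) * (A ^^ (k + m)) x j)
                      - (\<Sum>k\<le>n. (-1) ^ k * of_nat (n choose k) * (A ^^ (Suc k + m)) x j))"
    using Suc.IH[OF Suc.prems] Suc.IH[OF Ax] by (simp add: funpow_Suc_fun'[symmetric] del: funpow.simps)
  also have "\<dots> = (\<lambda>j. \<Sum>k\<le>Suc n. (-1) ^ k * of_nat (Suc n choose k) * (A ^^ (k + m)) x j)"
    using pascal_sum[of n "\<lambda>k. (A ^^ (k + m)) x j" for j] by simp
  finally show ?case .
qed


lemma density_parts:
  assumes "density_operator A"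
  shows "sa_op A" "psd A" "(\<lambda>i. A (basis_vec i) i) sums 1"
  using assms unfolding density_operator_def sa_op_def lin_op_def psd_def inner_basis by auto

lemma sums_Re_complex: "f sums s \<Longrightarrow> (\<lambda>n. Re (f n)) sums Re s"
  by (simp add: sums_complex_iff)

lemma psd_Re: "psd B \<Longrightarrow> x \<in> l2 \<Longrightarrow> 0 \<le> Re (l2_inner x (B x))"
  unfolding psd_def less_eq_complex_def by auto

lemma F1:
  assumes D: "density_operator A" and x: "x \<in> l2"
  shows "nrm2 (A x) \<le> Re (l2_inner x (A x))"
proof -
  note P = density_parts[OF D]
  have lin: "lin_op A" using P(1) by (rule sa_opD)
  have Ax: "A x \<in> l2" using lin x by (rule lin_opD)
  define r where "r = Re (l2_inner x (A x))"
  have le: "(cmod (A x i))\<^sup>2 \<le> Re (A (basis_vec i) i) * r" for i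
    using form_cs[OF P(1) P(2) basis_l2 x, of i] unfolding r_def inner_basis .
  have s1: "(\<lambda>i. Re (A (basis_vec i) i) * r) sums (1 * r)"
    using sums_mult2[OF sums_Re_complex[OF P(3)], of r] by simp
  have "nrm2 (A x) = (\<Sum>i. (cmod (A x i))\<^sup>2)" by (simp add: nrm2_def)
  also have "\<dots> \<le> (\<Sum>i. Re (A (basis_vec i) i) * r)"
    using le Ax s1 unfolding l2_iff by (intro suminf_le) (auto simp: sums_iff)
  also have "\<dots> = r" using s1 by (simp add: sums_iff)
  finally show ?thesis unfolding r_def .
qed

lemma F2:
  assumes D: "density_operator A"
  shows "bnd A"
  unfolding bnd_def
proof
  fix x assume x: "x \<in> l2"
  note P = density_parts[OF D]
  have Ax: "A x \<in> l2" using P(1) x by (simp add: sa_opD lin_opD)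
  define a where "a = nrm2 (A x)"
  define b where "b = nrm2 x"
  define r where "r = Re (l2_inner x (A x))"
  have a0: "0 \<le> a" unfolding a_def using Ax by (rule nrm2_nonneg)
  have b0: "0 \<le> b" unfolding b_def using x by (rule nrm2_nonneg)
  have ar: "a \<le> r" unfolding a_def r_def using D x by (rule F1)
  have "r\<^sup>2 \<le> (cmod (l2_inner x (A x)))\<^sup>2" unfolding r_def
    using power_mono[OF abs_Re_le_cmod[of "l2_inner x (A x)"] abs_ge_zero, of 2] by simp
  also have "\<dots> \<le> b * a" unfolding a_def b_def using x Ax by (rule cs)
  finally have rb: "r\<^sup>2 \<le> b * a" .
  have "a\<^sup>2 \<le> r\<^sup>2" using a0 ar by (simp add: power_mono)
  with rb have "a * a \<le> b * a" by (simp add: power2_eq_square)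
  hence "a \<le> b" using a0 by (cases "a = 0") (use b0 in auto)
  thus "nrm2 (A x) \<le> nrm2 x" unfolding a_def b_def .
qed

lemma herm:
  assumes D: "density_operator A"
  shows "l2_inner (basis_vec i) (A (basis_vec j)) = cnj (A (basis_vec i) j)"
proof -
  note P = density_parts[OF D]
  have "l2_inner (basis_vec i) (A (basis_vec j)) = l2_inner (A (basis_vec i)) (basis_vec j)"
    using P(1) basis_l2 by (simp add: sa_opD)
  thus ?thesis by (simp add: inner_basis_right)
qed

lemma matrix_op_eq:
  assumes D: "density_operator A" and x: "x \<in> l2"
    and M: "\<And>i j. l2_inner (basis_vec i) (A (basis_vec j)) = M i j"
  shows "matrix_op M x = A x"
proof
  fix i
  note P = density_parts[OF D]
  have lin: "lin_op A" using P(1) by (rule sa_opD)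
  have Ae: "A (basis_vec i) \<in> l2" using lin basis_l2 by (rule lin_opD)
  have "A x i = l2_inner (basis_vec i) (A x)" by (simp add: inner_basis)
  also have "\<dots> = l2_inner (A (basis_vec i)) x" using P(1) basis_l2 x by (simp add: sa_opD)
  also have "\<dots> = (\<Sum>j. cnj (A (basis_vec i) j) * x j)" by (simp add: l2_inner_def)
  also have "\<dots> = (\<Sum>j. M i j * x j)" using herm[OF D] M by simp
  finally show "matrix_op M x i = A x i" by (simp add: matrix_op_def)
qed

lemma matrix_op_pow_eq:
  assumes D: "density_operator A"
    and M: "\<And>i j. l2_inner (basis_vec i) (A (basis_vec j)) = M i j"
  shows "x \<in> l2 \<Longrightarrow> (matrix_op M ^^ k) x = (A ^^ k) x"
proof (induction k)
  case 0 thus ?case by simp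
next
  case (Suc k)
  have lin: "lin_op A" using density_parts(1)[OF D] by (rule sa_opD)
  show ?case using Suc matrix_op_eq[OF D pow_l2[OF lin Suc.prems] M] by simp
qed



lemma bnd_pow: assumes "lin_op B" "bnd B" shows "bnd (B ^^ n)"
proof (induction n)
  case 0 thus ?case by (simp add: bnd_def)
next
  case (Suc n)
  show ?case unfolding bnd_def
  proof
    fix x assume x: "x \<in> l2"
    have "nrm2 ((B ^^ Suc n) x) = nrm2 (B ((B ^^ n) x))" by simp
    also have "\<dots> \<le> nrm2 ((B ^^ n) x)" using assms(2) pow_l2[OF assms(1) x] unfolding bnd_def by blast
    also have "\<dots> \<le> nrm2 x" using Suc.IH x unfolding bnd_def by blast
    finally show "nrm2 ((B ^^ Suc n) x) \<le> nrm2 x" .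
  qed
qed

lemma sums_nonneg_complex:
  fixes f :: "nat \<Rightarrow> complex"
  assumes "f sums s" "\<And>n. 0 \<le> f n"
  shows "0 \<le> s"
proof -
  have r: "(\<lambda>n. Re (f n)) sums Re s" and i: "(\<lambda>n. Im (f n)) sums Im s"
    using assms(1) by (simp_all add: sums_complex_iff)
  have "\<And>n. Im (f n) = 0" "\<And>n. 0 \<le> Re (f n)" using assms(2) by (auto simp: less_eq_complex_def)
  hence "(\<lambda>n. Im (f n)) = (\<lambda>n. 0)" "\<And>n. 0 \<le> Re (f n)" by auto
  hence "Im s = 0" using i sums_zero sums_unique2 by metis
  moreover have "0 \<le> Re s" by (rule sums_le[OF _ sums_zero r]) (use \<open>\<And>n. 0 \<le> Re (f n)\<close> in simp)
  ultimately show ?thesis by (simp add: less_eq_complex_def)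
qed

lemma AC_psd:
  assumes D: "density_operator A" and x: "x \<in> l2"
  shows "0 \<le> l2_inner x (A ((Cop A ^^ n) x))"
proof -
  note P = density_parts[OF D]
  have lin: "lin_op A" using P(1) by (rule sa_opD)
  have saC: "sa_op (Cop A)" using P(1) by (rule sa_op_Cop)
  have linC: "lin_op (Cop A)" using lin by (rule lin_op_Cop)
  have key: "l2_inner x (A ((Cop A ^^ m) z)) = l2_inner ((Cop A ^^ m) x) (A z)" if z: "z \<in> l2" for m z
  proof -
    have "A ((Cop A ^^ m) z) = (Cop A ^^ m) (A z)" using Cop_pow_commute[OF lin z] by simp
    moreover have "l2_inner ((Cop A ^^ m) x) (A z) = l2_inner x ((Cop A ^^ m) (A z))"
      using sa_op_pow[OF saC] x lin_opD(1)[OF lin z] by (simp add: sa_opD)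
    ultimately show ?thesis by simp
  qed
  obtain m where "n = m + m \<or> n = m + Suc m"
  proof (cases "even n")
    case True then obtain m where "n = 2 * m" by (rule evenE)
    thus ?thesis using that[of m] by simp
  next
    case False then obtain m where "n = 2 * m + 1" by (rule oddE)
    thus ?thesis using that[of m] by simp
  qed
  thus ?thesis
  proof
    assume n: "n = m + m"
    define y where "y = (Cop A ^^ m) x"
    have y: "y \<in> l2" unfolding y_def using linC x by (rule pow_l2)
    have "l2_inner x (A ((Cop A ^^ n) x)) = l2_inner x (A ((Cop A ^^ m) y))"
      unfolding n y_def by (simp add: funpow_add)
    also have "\<dots> = l2_inner y (A y)" using key[OF y] unfolding y_def by simp
    finally show ?thesis using P(2) y unfolding psd_def by simp
  next
    assume n: "n = m + Suc m"
    define y where "y = (Cop A ^^ m) x"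
    have y: "y \<in> l2" unfolding y_def using linC x by (rule pow_l2)
    have Cy: "Cop A y \<in> l2" using linC y by (rule lin_opD)
    have Ay: "A y \<in> l2" using lin y by (rule lin_opD)
    have AAy: "A (A y) \<in> l2" using lin Ay by (rule lin_opD)
    have "(Cop A ^^ n) x = (Cop A ^^ m) (Cop A y)"
      unfolding n y_def by (simp only: funpow_add comp_apply funpow.simps(2))
    hence "l2_inner x (A ((Cop A ^^ n) x)) = l2_inner x (A ((Cop A ^^ m) (Cop A y)))" by simp
    also have "\<dots> = l2_inner y (A (Cop A y))" using key[OF Cy] unfolding y_def by simp
    also have "A (Cop A y) = (\<lambda>j. A y j - A (A y) j)" unfolding Cop_def using lin y Ay by (rule lin_op_diff)
    also have "l2_inner y \<dots> = l2_inner y (A y) - l2_inner y (A (A y))"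
      using inner_diff_right[OF y Ay AAy, of 1] by simp
    also have "l2_inner y (A (A y)) = l2_inner (A y) (A y)" using P(1) y Ay by (simp add: sa_opD)
    also have "\<dots> = of_real (nrm2 (A y))" using Ay by (rule inner_self)
    finally have e: "l2_inner x (A ((Cop A ^^ n) x)) = l2_inner y (A y) - of_real (nrm2 (A y))" .
    have "nrm2 (A y) \<le> Re (l2_inner y (A y))" using D y by (rule F1)
    moreover have "Im (l2_inner y (A y)) = 0" using P(1) y by (rule inner_real_sa)
    ultimately show ?thesis unfolding e by (simp add: less_eq_complex_def)
  qed
qed


lemma diag_nrm2:
  assumes D: "density_operator A"
  shows "nrm2 (A (basis_vec i)) \<le> Re (A (basis_vec i) i)"
  using F1[OF D basis_l2, of i] by (simp add: inner_basis)

lemma diag_summable: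
  assumes D: "density_operator A"
  shows "summable (\<lambda>i. nrm2 (A (basis_vec i)))" "(\<Sum>i. nrm2 (A (basis_vec i))) \<le> 1"
proof -
  note P = density_parts[OF D]
  have lin: "lin_op A" using P(1) by (rule sa_opD)
  have r: "(\<lambda>i. Re (A (basis_vec i) i)) sums 1" using sums_Re_complex[OF P(3)] by simp
  have nn: "0 \<le> nrm2 (A (basis_vec i))" for i using lin_opD(1)[OF lin basis_l2] by (rule nrm2_nonneg)
  show s: "summable (\<lambda>i. nrm2 (A (basis_vec i)))"
    by (rule summable_comparison_test'[OF sums_summable[OF r]]) (use nn diag_nrm2[OF D] in auto)
  show "(\<Sum>i. nrm2 (A (basis_vec i))) \<le> 1"
    using suminf_le[OF diag_nrm2[OF D] s sums_summable[OF r]] r by (simp add: sums_iff)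
qed

lemma fwd_HS:
  assumes D: "density_operator A"
    and M: "\<And>i j. l2_inner (basis_vec i) (A (basis_vec j)) = M i j"
  shows "(\<lambda>(i, j). (cmod (M i j))\<^sup>2) summable_on UNIV \<and> (\<Sum>\<^sub>\<infinity>(i, j). (cmod (M i j))\<^sup>2) \<le> 1"
proof -
  note P = density_parts[OF D]
  have lin: "lin_op A" using P(1) by (rule sa_opD)
  define f where "f = (\<lambda>(i, j). (cmod (M i j))\<^sup>2)"
  define g where "g = (\<lambda>i. nrm2 (A (basis_vec i)))"
  have fe: "f (i, j) = (cmod (A (basis_vec i) j))\<^sup>2" for i j
    unfolding f_def using herm[OF D, of i j] M[of i j] by simp
  have hs: "((\<lambda>j. f (i, j)) has_sum g i) UNIV" for i
  proof -
    have "(\<lambda>j. (cmod (A (basis_vec i) j))\<^sup>2) sums g i"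
      unfolding g_def nrm2_def using lin_opD(1)[OF lin basis_l2, of i] unfolding l2_iff
      by (rule summable_sums)
    thus ?thesis unfolding fe by (rule sums_nonneg_imp_has_sum) simp
  qed
  have gs: "g summable_on UNIV"
    using diag_summable(1)[OF D] nrm2_nonneg[OF lin_opD(1)[OF lin basis_l2]]
    unfolding g_def by (subst summable_on_UNIV_nonneg_real_iff) auto
  have fs: "f summable_on Sigma UNIV (\<lambda>_. UNIV)"
    by (rule summable_on_SigmaI[OF hs gs]) (simp add: f_def)
  hence fs': "f summable_on UNIV" by simp
  have "(g has_sum infsum f UNIV) UNIV"
    by (rule has_sum_SigmaD[OF _ hs]) (use has_sum_infsum[OF fs] in simp)
  hence "g sums infsum f UNIV" by (rule has_sum_imp_sums)
  hence "infsum f UNIV \<le> 1" using diag_summable(2)[OF D] unfolding g_def by (simp add: sums_iff)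
  thus ?thesis using fs' unfolding f_def by simp
qed

lemma fwd_herm:
  assumes D: "density_operator A"
    and M: "\<And>i j. l2_inner (basis_vec i) (A (basis_vec j)) = M i j"
  shows "M i j = cnj (M j i)"
  using herm[OF D, of i j] M[of i j] M[of j i] by (simp add: inner_basis)

lemma pow_diag_eq:
  assumes D: "density_operator A"
    and M: "\<And>i j. l2_inner (basis_vec i) (A (basis_vec j)) = M i j"
  shows "pow_diag M k i = (A ^^ k) (basis_vec i) i"
  unfolding pow_diag_def inner_basis using matrix_op_pow_eq[OF D M basis_l2] by simp

lemma trace_summable:
  assumes D: "density_operator A"
  shows "summable (\<lambda>i. (A ^^ Suc k) (basis_vec i) i)"
proof (cases k)
  case 0 thus ?thesis using density_parts(3)[OF D] by (simp add: sums_summable)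
next
  case (Suc k')
  note P = density_parts[OF D]
  have lin: "lin_op A" using P(1) by (rule sa_opD)
  have bA: "bnd A" using D by (rule F2)
  show ?thesis
  proof (rule summable_comparison_test'[OF diag_summable(1)[OF D]])
    fix i
    define e where "e = basis_vec i"
    have e: "e \<in> l2" unfolding e_def by (rule basis_l2)
    have Ae: "A e \<in> l2" using lin e by (rule lin_opD)
    have "(A ^^ Suc k) e i = l2_inner e ((A ^^ (1 + k)) e)" unfolding e_def by (simp add: inner_basis)
    also have "\<dots> = l2_inner ((A ^^ 1) e) ((A ^^ k) e)" using P(1) e e by (rule inner_pow_split)
    finally have eq: "(A ^^ Suc k) e i = l2_inner (A e) ((A ^^ k) e)" by simp
    have Ake: "(A ^^ k) e = (A ^^ k') (A e)" unfolding Suc by (simp only: funpow_Suc_fun')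
    have b: "nrm2 ((A ^^ k) e) \<le> nrm2 (A e)"
      unfolding Ake using bnd_pow[OF lin bA, of k'] Ae unfolding bnd_def by blast
    have "(cmod ((A ^^ Suc k) e i))\<^sup>2 \<le> nrm2 (A e) * nrm2 ((A ^^ k) e)"
      unfolding eq using Ae pow_l2[OF lin e] by (rule cs)
    also have "\<dots> \<le> (nrm2 (A e))\<^sup>2"
      using mult_left_mono[OF b nrm2_nonneg[OF Ae]] by (simp add: power2_eq_square)
    finally have "cmod ((A ^^ Suc k) e i) \<le> nrm2 (A e)"
      using power2_le_imp_le nrm2_nonneg[OF Ae] by blast
    thus "norm ((A ^^ Suc k) (basis_vec i) i) \<le> nrm2 (A (basis_vec i))" unfolding e_def by simp
  qed
qed

lemma fwd_moment:
  assumes D: "density_operator A"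
    and M: "\<And>i j. l2_inner (basis_vec i) (A (basis_vec j)) = M i j"
  shows "\<exists>t :: nat \<Rightarrow> complex.
        (\<forall>k\<le>n. (\<lambda>i. pow_diag M (k + 1) i) sums t k) \<and>
        0 \<le> (\<Sum>k\<le>n. (-1) ^ k * of_nat (n choose k) * t k)"
proof -
  note P = density_parts[OF D]
  have lin: "lin_op A" using P(1) by (rule sa_opD)
  define t where "t k = (\<Sum>i. (A ^^ Suc k) (basis_vec i) i)" for k
  have ts: "(\<lambda>i. pow_diag M (k + 1) i) sums t k" for k
    unfolding t_def pow_diag_eq[OF D M] using trace_summable[OF D] by (simp add: summable_sums)
  have "(\<lambda>i. \<Sum>k\<le>n. (-1) ^ k * of_nat (n choose k) * pow_diag M (k + 1) i) sums
        (\<Sum>k\<le>n. (-1) ^ k * of_nat (n choose k) * t k)"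
    by (rule sums_sum) (rule sums_mult[OF ts])
  moreover have "(\<Sum>k\<le>n. (-1) ^ k * of_nat (n choose k) * pow_diag M (k + 1) i) =
                 l2_inner (basis_vec i) (A ((Cop A ^^ n) (basis_vec i)))" for i
    using binom_op[OF lin basis_l2, of 1 n i]
    by (simp add: inner_basis pow_diag_eq[OF D M])
  ultimately have "(\<lambda>i. l2_inner (basis_vec i) (A ((Cop A ^^ n) (basis_vec i)))) sums
        (\<Sum>k\<le>n. (-1) ^ k * of_nat (n choose k) * t k)" by simp
  hence "0 \<le> (\<Sum>k\<le>n. (-1) ^ k * of_nat (n choose k) * t k)"
    by (rule sums_nonneg_complex) (rule AC_psd[OF D basis_l2])
  thus ?thesis using ts by blast
qed



definition rown :: "(nat \<Rightarrow> nat \<Rightarrow> complex) \<Rightarrow> nat \<Rightarrow> real" where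
  "rown M i = (\<Sum>j. (cmod (M i j))\<^sup>2)"

lemma rows:
  assumes hs: "(\<lambda>(i, j). (cmod (M i j))\<^sup>2) summable_on UNIV"
      and le: "(\<Sum>\<^sub>\<infinity>(i, j). (cmod (M i j))\<^sup>2) \<le> 1"
  shows "summable (\<lambda>j. (cmod (M i j))\<^sup>2)" "summable (rown M)" "suminf (rown M) \<le> 1"
proof -
  define F where "F i j = (cmod (M i j))\<^sup>2" for i j
  have hs': "(\<lambda>(i, j). F i j) summable_on Sigma UNIV (\<lambda>_. UNIV)" using hs unfolding F_def by simp
  have r: "F i summable_on UNIV" for i by (rule summable_on_SigmaD1[OF hs']) simp
  show rs: "summable (\<lambda>j. (cmod (M i j))\<^sup>2)" for i using summable_on_imp_summable[OF r[of i]] unfolding F_def .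
  have h: "((\<lambda>j. (\<lambda>(i, j). F i j) (i, j)) has_sum rown M i) UNIV" for i
    unfolding rown_def F_def by (rule sums_nonneg_imp_has_sum) (use rs summable_sums in auto)
  have "(rown M has_sum infsum (\<lambda>(i, j). F i j) (Sigma UNIV (\<lambda>_. UNIV))) UNIV"
    by (rule has_sum_SigmaD[OF has_sum_infsum[OF hs'] h])
  hence "rown M sums infsum (\<lambda>(i, j). F i j) UNIV" by (simp add: has_sum_imp_sums)
  thus "summable (rown M)" "suminf (rown M) \<le> 1" using le unfolding F_def by (auto simp: sums_iff)
qed

definition rowv :: "(nat \<Rightarrow> nat \<Rightarrow> complex) \<Rightarrow> nat \<Rightarrow> nat \<Rightarrow> complex" where
  "rowv M i = (\<lambda>j. cnj (M i j))"

lemma rowv_l2: "summable (\<lambda>j. (cmod (M i j))\<^sup>2) \<Longrightarrow> rowv M i \<in> l2"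
  by (simp add: rowv_def l2_iff)

lemma rowv_nrm2: "nrm2 (rowv M i) = rown M i"
  by (simp add: rowv_def nrm2_def rown_def)

lemma matrix_op_inner: "matrix_op M x i = l2_inner (rowv M i) x"
  by (simp add: matrix_op_def l2_inner_def rowv_def)

lemma conv_basic:
  assumes hs: "(\<lambda>(i, j). (cmod (M i j))\<^sup>2) summable_on UNIV"
      and le: "(\<Sum>\<^sub>\<infinity>(i, j). (cmod (M i j))\<^sup>2) \<le> 1"
  shows "lin_op (matrix_op M)" "bnd (matrix_op M)"
proof -
  note R = rows[OF hs le]
  have rv: "rowv M i \<in> l2" for i using R(1) by (rule rowv_l2)
  have est: "(cmod (matrix_op M x i))\<^sup>2 \<le> rown M i * nrm2 x" if x: "x \<in> l2" for x i
    unfolding matrix_op_inner rowv_nrm2[symmetric] using rv x by (rule cs)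
  have sm: "summable (\<lambda>i. rown M i * nrm2 x)" for x using R(2) by (rule summable_mult2)
  have l2: "matrix_op M x \<in> l2" if x: "x \<in> l2" for x
    unfolding l2_iff by (rule summable_comparison_test'[OF sm]) (use est[OF x] in simp)
  show "lin_op (matrix_op M)" unfolding lin_op_def
  proof (intro conjI ballI allI)
    show "matrix_op M x \<in> l2" if "x \<in> l2" for x using l2 that .
    fix x y a b assume x: "x \<in> l2" and y: "y \<in> l2"
    show "matrix_op M (\<lambda>n. a * x n + b * y n) = (\<lambda>n. a * matrix_op M x n + b * matrix_op M y n)"
      unfolding fun_eq_iff matrix_op_inner using rv x y by (simp add: inner_comb_right)
  qed
  show "bnd (matrix_op M)" unfolding bnd_def
  proof
    fix x assume x: "x \<in> l2"
    have "nrm2 (matrix_op M x) = (\<Sum>i. (cmod (matrix_op M x i))\<^sup>2)" by (simp add: nrm2_def)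
    also have "\<dots> \<le> (\<Sum>i. rown M i * nrm2 x)"
      by (rule suminf_le[OF est[OF x] _ sm]) (use l2[OF x] in \<open>simp add: l2_iff\<close>)
    also have "\<dots> = suminf (rown M) * nrm2 x" using R(2) by (simp add: suminf_mult2)
    also have "\<dots> \<le> 1 * nrm2 x" using R(3) nrm2_nonneg[OF x] by (rule mult_right_mono)
    finally show "nrm2 (matrix_op M x) \<le> nrm2 x" by simp
  qed
qed

lemma matrix_op_basis: "matrix_op M (basis_vec j) i = M i j"
proof -
  have "(\<lambda>k. M i k * basis_vec j k) = (\<lambda>k. if k = j then M i j else 0)" by (auto simp: basis_vec_def)
  thus ?thesis unfolding matrix_op_def using sums_single[of j "\<lambda>_. M i j"] by (simp add: sums_iff)
qed


lemma nat_infsum: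
  fixes f :: "nat \<Rightarrow> complex"
  shows "summable (\<lambda>n. norm (f n)) \<Longrightarrow> f sums s \<Longrightarrow> infsum f UNIV = s"
  by (rule infsumI) (rule norm_summable_imp_has_sum)

lemma sum_cnj_suminf:
  fixes f :: "nat \<Rightarrow> complex"
  shows "f sums s \<Longrightarrow> (\<lambda>n. cnj (f n)) sums cnj s"
  by (simp add: sums_cnj)

lemma prod_summable:
  assumes x: "x \<in> l2" and y: "y \<in> l2"
  shows "(\<lambda>(i, j). (cmod (y i))\<^sup>2 * (cmod (x j))\<^sup>2) summable_on UNIV"
proof -
  have xs: "(\<lambda>j. (cmod (x j))\<^sup>2) sums nrm2 x" using x unfolding l2_iff nrm2_def by (rule summable_sums)
  have h: "((\<lambda>j. (\<lambda>(i, j). (cmod (y i))\<^sup>2 * (cmod (x j))\<^sup>2) (i, j)) has_sum ((cmod (y i))\<^sup>2 * nrm2 x)) UNIV" for i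
    by simp (rule sums_nonneg_imp_has_sum[OF sums_mult[OF xs]], simp)
  have g: "(\<lambda>i. (cmod (y i))\<^sup>2 * nrm2 x) summable_on UNIV"
    using nrm2_nonneg[OF x] y unfolding l2_iff
    by (subst summable_on_UNIV_nonneg_real_iff) (auto intro: summable_mult2)
  have "(\<lambda>(i, j). (cmod (y i))\<^sup>2 * (cmod (x j))\<^sup>2) summable_on Sigma UNIV (\<lambda>_. UNIV)"
    by (rule summable_on_SigmaI[OF h g]) simp
  thus ?thesis by simp
qed

lemma conv_sa:
  assumes hs: "(\<lambda>(i, j). (cmod (M i j))\<^sup>2) summable_on UNIV"
      and le: "(\<Sum>\<^sub>\<infinity>(i, j). (cmod (M i j))\<^sup>2) \<le> 1"
      and herm: "\<forall>i j. M i j = cnj (M j i)"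
  shows "sa_op (matrix_op M)"
proof -
  note R = rows[OF hs le]
  note B = conv_basic[OF hs le]
  have rv: "rowv M i \<in> l2" for i using R(1) by (rule rowv_l2)
  show ?thesis unfolding sa_op_def
  proof (intro conjI ballI)
    show "lin_op (matrix_op M)" by (rule B(1))
    fix x y assume x: "x \<in> l2" and y: "y \<in> l2"
    have Ax: "matrix_op M x \<in> l2" and Ay: "matrix_op M y \<in> l2" using B(1) x y by (simp_all add: lin_opD)
    define g where "g i j = cnj (M i j) * cnj (x j) * y i" for i j
    have rsum: "(\<lambda>j. M i j * x j) sums matrix_op M x i" for i
      unfolding matrix_op_inner using inner_sums[OF rv x] by (simp add: rowv_def)
    have rabs: "summable (\<lambda>j. norm (M i j * x j))" for i
      using inner_abs_summable[OF rv x] by (simp add: rowv_def norm_mult)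
    have gi: "(\<lambda>j. g i j) sums (cnj (matrix_op M x i) * y i)" for i
      using sums_mult2[OF sum_cnj_suminf[OF rsum[of i]], of "y i"] by (simp add: g_def mult_ac)
    have gia: "summable (\<lambda>j. norm (g i j))" for i
      using summable_mult2[OF rabs[of i], of "norm (y i)"] by (simp add: g_def norm_mult mult_ac)
    have csum: "(\<lambda>i. M j i * y i) sums matrix_op M y j" for j
      unfolding matrix_op_inner using inner_sums[OF rv y] by (simp add: rowv_def)
    have cabs: "summable (\<lambda>i. norm (M j i * y i))" for j
      using inner_abs_summable[OF rv y] by (simp add: rowv_def norm_mult)
    have gj: "(\<lambda>i. g i j) sums (cnj (x j) * matrix_op M y j)" for j
    proof -
      have "(\<lambda>i. cnj (x j) * (M j i * y i)) sums (cnj (x j) * matrix_op M y j)"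
        by (rule sums_mult[OF csum])
      moreover have "cnj (x j) * (M j i * y i) = g i j" for i
        using herm[rule_format, of j i] by (simp add: g_def mult_ac)
      ultimately show ?thesis by simp
    qed
    have gja: "summable (\<lambda>i. norm (g i j))" for j
    proof -
      have "summable (\<lambda>i. norm (x j) * norm (M j i * y i))" by (rule summable_mult[OF cabs])
      moreover have "norm (x j) * norm (M j i * y i) = norm (g i j)" for i
        using herm[rule_format, of j i] by (simp add: g_def norm_mult mult_ac)
      ultimately show ?thesis by simp
    qed
    have o1: "(\<lambda>i. cnj (matrix_op M x i) * y i) sums l2_inner (matrix_op M x) y" using Ax y by (rule inner_sums)
    have o1a: "summable (\<lambda>i. norm (cnj (matrix_op M x i) * y i))" using inner_abs_summable[OF Ax y] by simp
    have o2: "(\<lambda>j. cnj (x j) * matrix_op M y j) sums l2_inner x (matrix_op M y)" using x Ay by (rule inner_sums)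
    have o2a: "summable (\<lambda>j. norm (cnj (x j) * matrix_op M y j))" using inner_abs_summable[OF x Ay] by simp
    have bound: "norm (g i j) \<le> norm ((cmod (M i j))\<^sup>2 + (cmod (y i))\<^sup>2 * (cmod (x j))\<^sup>2)" for i j
    proof -
      have "norm (g i j) = cmod (M i j) * (cmod (y i) * cmod (x j))" by (simp add: g_def norm_mult mult_ac)
      also have "\<dots> \<le> (cmod (M i j))\<^sup>2 + (cmod (y i) * cmod (x j))\<^sup>2"
      proof -
        have "0 \<le> cmod (M i j) * (cmod (y i) * cmod (x j))" by simp
        with two_mul_le[of "cmod (M i j)" "cmod (y i) * cmod (x j)"] show ?thesis by linarith
      qed
      finally show ?thesis by (simp add: power_mult_distrib)
    qed
    define h where "h p = (cmod (M (fst p) (snd p)))\<^sup>2 + (cmod (y (fst p)))\<^sup>2 * (cmod (x (snd p)))\<^sup>2" for p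
    have "(\<lambda>p. (\<lambda>(i, j). (cmod (M i j))\<^sup>2) p + (\<lambda>(i, j). (cmod (y i))\<^sup>2 * (cmod (x j))\<^sup>2) p) summable_on UNIV"
      by (rule summable_on_add[OF hs prod_summable[OF x y]])
    moreover have "(\<lambda>p. (\<lambda>(i, j). (cmod (M i j))\<^sup>2) p + (\<lambda>(i, j). (cmod (y i))\<^sup>2 * (cmod (x j))\<^sup>2) p) = h"
      by (auto simp: h_def fun_eq_iff)
    ultimately have hsum: "h summable_on UNIV" by simp
    have hn: "(\<lambda>p. norm (h p)) = h" by (auto simp: h_def fun_eq_iff)
    have "(\<lambda>p. norm ((\<lambda>(i, j). g i j) p)) summable_on UNIV"
    proof (rule Infinite_Sum.abs_summable_on_comparison_test)
      show "(\<lambda>p. norm (h p)) summable_on UNIV" using hsum unfolding hn .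
      show "norm ((\<lambda>(i, j). g i j) p) \<le> norm (h p)"
        for p using bound by (cases p) (simp add: h_def)
    qed
    hence ps: "(\<lambda>(i, j). g i j) summable_on UNIV \<times> UNIV" using abs_summable_summable by simp
    have "l2_inner (matrix_op M x) y = infsum (\<lambda>i. infsum (\<lambda>j. g i j) UNIV) UNIV"
      using nat_infsum[OF gia gi] nat_infsum[OF o1a o1] by simp
    also have "\<dots> = infsum (\<lambda>j. infsum (\<lambda>i. g i j) UNIV) UNIV"
      by (rule infsum_swap_banach[OF ps])
    also have "\<dots> = l2_inner x (matrix_op M y)"
      using nat_infsum[OF gja gj] nat_infsum[OF o2a o2] by simp
    finally show "l2_inner (matrix_op M x) y = l2_inner x (matrix_op M y)" .
  qed
qed



lemma nrm2_diff:
  assumes z: "z \<in> l2" and w: "w \<in> l2"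
  shows "nrm2 (\<lambda>n. z n - w n) = nrm2 z - 2 * Re (l2_inner z w) + nrm2 w"
proof -
  have d: "(\<lambda>n. z n - w n) \<in> l2" using z w by (rule l2_diff)
  have "of_real (nrm2 (\<lambda>n. z n - w n)) = l2_inner (\<lambda>n. z n - w n) (\<lambda>n. z n - w n)"
    using d by (simp add: inner_self)
  also have "\<dots> = l2_inner z (\<lambda>n. z n - w n) - l2_inner w (\<lambda>n. z n - w n)"
    using inner_diff_left[OF d z w, of 1] by simp
  also have "l2_inner z (\<lambda>n. z n - w n) = l2_inner z z - l2_inner z w"
    using inner_diff_right[OF z z w, of 1] by simp
  also have "l2_inner w (\<lambda>n. z n - w n) = l2_inner w z - l2_inner w w"
    using inner_diff_right[OF w z w, of 1] by simp
  also have "l2_inner w z = cnj (l2_inner z w)" using z w by (rule inner_cnj)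
  finally have "of_real (nrm2 (\<lambda>n. z n - w n)) = of_real (nrm2 z) - l2_inner z w - cnj (l2_inner z w) + of_real (nrm2 w)"
    using inner_self[OF z] inner_self[OF w] by simp
  hence "Re (of_real (nrm2 (\<lambda>n. z n - w n))) = Re (of_real (nrm2 z) - l2_inner z w - cnj (l2_inner z w) + of_real (nrm2 w))"
    by simp
  thus ?thesis by simp
qed

lemma decomp:
  assumes lin: "lin_op A" and e: "e \<in> l2"
  shows "A ((Cop A ^^ n) e) = (\<lambda>i. A e i - (\<Sum>j<n. A ((Cop A ^^ j) (A e)) i))"
proof (induction n)
  case 0 thus ?case by simp
next
  case (Suc n)
  have linC: "lin_op (Cop A)" using lin by (rule lin_op_Cop)
  have Ae: "A e \<in> l2" using lin e by (rule lin_opD)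
  have "(Cop A ^^ Suc n) e = (Cop A ^^ n) (\<lambda>j. e j - A e j)"
    by (simp only: funpow_Suc_fun') (simp add: Cop_def)
  also have "\<dots> = (\<lambda>j. (Cop A ^^ n) e j - (Cop A ^^ n) (A e) j)"
    using lin_op_pow[OF linC] e Ae by (rule lin_op_diff)
  finally have e1: "(Cop A ^^ Suc n) e = (\<lambda>j. (Cop A ^^ n) e j - (Cop A ^^ n) (A e) j)" .
  have "A ((Cop A ^^ Suc n) e) = (\<lambda>i. A ((Cop A ^^ n) e) i - A ((Cop A ^^ n) (A e)) i)"
    unfolding e1 using lin pow_l2[OF linC e] pow_l2[OF linC Ae] by (rule lin_op_diff)
  also have "\<dots> = (\<lambda>i. A e i - (\<Sum>j<Suc n. A ((Cop A ^^ j) (A e)) i))"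
    unfolding Suc.IH by (simp add: algebra_simps)
  finally show ?case .
qed


lemma growth_step:
  assumes C: "sa_op C" and x: "x \<in> l2"
  shows "(nrm2 ((C ^^ Suc k) x))\<^sup>2 \<le> nrm2 ((C ^^ k) x) * nrm2 ((C ^^ Suc (Suc k)) x)"
proof -
  have lin: "lin_op C" using C by (rule sa_opD)
  have "complex_of_real (nrm2 ((C ^^ Suc k) x)) = l2_inner ((C ^^ Suc k) x) ((C ^^ Suc k) x)"
    by (rule inner_self[OF pow_l2[OF lin x], symmetric])
  also have "\<dots> = l2_inner x ((C ^^ (Suc k + Suc k)) x)" by (rule inner_pow_split[OF C x x, symmetric])
  also have "\<dots> = l2_inner ((C ^^ k) x) ((C ^^ Suc (Suc k)) x)"
    using inner_pow_split[OF C x x, of k "Suc (Suc k)"] by (simp only: add_Suc_right add_Suc)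
  finally have e: "complex_of_real (nrm2 ((C ^^ Suc k) x)) = l2_inner ((C ^^ k) x) ((C ^^ Suc (Suc k)) x)" .
  have "(nrm2 ((C ^^ Suc k) x))\<^sup>2 = (cmod (complex_of_real (nrm2 ((C ^^ Suc k) x))))\<^sup>2"
    using nrm2_nonneg[OF pow_l2[OF lin x]] by simp
  also have "\<dots> \<le> nrm2 ((C ^^ k) x) * nrm2 ((C ^^ Suc (Suc k)) x)"
    unfolding e using pow_l2[OF lin x] pow_l2[OF lin x] by (rule cs)
  finally show ?thesis .
qed

lemma growth:
  assumes C: "sa_op C" and x: "x \<in> l2" and pos: "0 < nrm2 x" and q: "0 < q"
    and base: "q * nrm2 x \<le> nrm2 (C x)"
  shows "q * nrm2 ((C ^^ k) x) \<le> nrm2 ((C ^^ Suc k) x) \<and> 0 < nrm2 ((C ^^ k) x)"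
proof (induction k)
  case 0 thus ?case using base pos by simp
next
  case (Suc k)
  define a where "a = nrm2 ((C ^^ k) x)"
  define b where "b = nrm2 ((C ^^ Suc k) x)"
  define c where "c = nrm2 ((C ^^ Suc (Suc k)) x)"
  have a: "0 < a" and ab: "q * a \<le> b" using Suc.IH unfolding a_def b_def by auto
  have b: "0 < b" using a ab q by (smt (verit) mult_pos_pos)
  have st: "b\<^sup>2 \<le> a * c" unfolding a_def b_def c_def using C x by (rule growth_step)
  have "a * (q * b) = (q * a) * b" by (simp add: mult_ac)
  also have "\<dots> \<le> b * b" using ab b by (simp add: mult_right_mono)
  also have "\<dots> \<le> a * c" using st by (simp add: power2_eq_square)
  finally have "a * (q * b) \<le> a * c" .
  hence "q * b \<le> c" using a by simp
  thus ?case using b unfolding b_def c_def by simp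
qed

lemma growth_pow:
  assumes C: "sa_op C" and x: "x \<in> l2" and pos: "0 < nrm2 x" and q: "0 < q"
    and base: "q * nrm2 x \<le> nrm2 (C x)"
  shows "q ^ k * nrm2 x \<le> nrm2 ((C ^^ k) x)"
proof (induction k)
  case 0 thus ?case by simp
next
  case (Suc k)
  have "q ^ Suc k * nrm2 x = q * (q ^ k * nrm2 x)" by simp
  also have "\<dots> \<le> q * nrm2 ((C ^^ k) x)" using Suc.IH q by simp
  also have "\<dots> \<le> nrm2 ((C ^^ Suc k) x)" using growth[OF assms, of k] by simp
  finally show ?case .
qed

lemma lower_A:
  assumes sa: "sa_op A" and z: "z \<in> l2" and d: "0 \<le> d"
    and g: "(1 + d)\<^sup>2 * nrm2 z \<le> nrm2 (Cop A z)"
  shows "d\<^sup>2 * nrm2 z \<le> nrm2 (A z)"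
proof -
  have lin: "lin_op A" using sa by (rule sa_opD)
  have Cz: "Cop A z \<in> l2" using lin_op_Cop[OF lin] z by (rule lin_opD)
  have Az: "A z = (\<lambda>n. z n - Cop A z n)" by (simp add: Cop_def)
  define a where "a = sqrt (nrm2 z)"
  define b where "b = sqrt (nrm2 (Cop A z))"
  have a0: "0 \<le> a" and b0: "0 \<le> b" using nrm2_nonneg[OF z] nrm2_nonneg[OF Cz] by (simp_all add: a_def b_def)
  have aa: "a\<^sup>2 = nrm2 z" unfolding a_def using nrm2_nonneg[OF z] by simp
  have bb: "b\<^sup>2 = nrm2 (Cop A z)" unfolding b_def using nrm2_nonneg[OF Cz] by simp
  have "sqrt ((1 + d)\<^sup>2 * nrm2 z) \<le> b" unfolding b_def using g by (rule real_sqrt_le_mono)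
  hence ba: "(1 + d) * a \<le> b" unfolding a_def using d nrm2_nonneg[OF z] by (simp add: real_sqrt_mult)
  have "(Re (l2_inner z (Cop A z)))\<^sup>2 \<le> (cmod (l2_inner z (Cop A z)))\<^sup>2"
    using power_mono[OF abs_Re_le_cmod[of "l2_inner z (Cop A z)"] abs_ge_zero, of 2] by simp
  also have "\<dots> \<le> nrm2 z * nrm2 (Cop A z)" using z Cz by (rule cs)
  also have "\<dots> = (a * b)\<^sup>2" using aa bb by (simp add: power_mult_distrib)
  finally have "Re (l2_inner z (Cop A z)) \<le> a * b"
    by (rule power2_le_imp_le) (use a0 b0 in simp)
  hence "a\<^sup>2 - 2 * (a * b) + b\<^sup>2 \<le> nrm2 (A z)"
    unfolding Az nrm2_diff[OF z Cz] aa bb by simp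
  moreover have "(d * a)\<^sup>2 \<le> (b - a)\<^sup>2" using ba d a0 by (intro power_mono) (simp_all add: algebra_simps)
  moreover have "(b - a)\<^sup>2 = a\<^sup>2 - 2 * (a * b) + b\<^sup>2" by (simp add: power2_eq_square algebra_simps)
  ultimately show ?thesis using aa by (simp add: power_mult_distrib)
qed


lemma pos_main:
  assumes sa: "sa_op A" and bd: "bnd A"
    and tr: "(\<lambda>i. A (basis_vec i) i) sums 1"
    and mom: "\<And>n. \<exists>V. (\<lambda>i. A ((Cop A ^^ n) (basis_vec i)) i) sums V \<and> 0 \<le> V"
  shows "psd A"
  unfolding psd_def
proof (rule ballI, rule ccontr)
  fix x assume x: "x \<in> l2" and nn: "\<not> 0 \<le> l2_inner x (A x)"
  have lin: "lin_op A" using sa by (rule sa_opD)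
  have C: "sa_op (Cop A)" using sa by (rule sa_op_Cop)
  have linC: "lin_op (Cop A)" using lin by (rule lin_op_Cop)
  have psdC: "psd (Cop A)" using sa bd by (rule psd_Cop)
  have Ax: "A x \<in> l2" using lin x by (rule lin_opD)
  have im: "Im (l2_inner x (A x)) = 0" using sa x by (rule inner_real_sa)
  have re: "Re (l2_inner x (A x)) < 0" using nn im by (auto simp: less_eq_complex_def)
  define nx where "nx = nrm2 x"
  have nx0: "0 \<le> nx" unfolding nx_def using x by (rule nrm2_nonneg)
  have nxpos: "0 < nx"
  proof (rule ccontr)
    assume "\<not> 0 < nx"
    hence "nx = 0" using nx0 by simp
    hence "(cmod (l2_inner x (A x)))\<^sup>2 \<le> 0" using cs[OF x Ax] unfolding nx_def by simp
    hence "l2_inner x (A x) = 0" by simp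
    thus False using re by simp
  qed
  define d where "d = - Re (l2_inner x (A x)) / nx"
  have dpos: "0 < d" unfolding d_def using re nxpos by (simp add: divide_neg_pos)
  have dnx: "- Re (l2_inner x (A x)) = d * nx" unfolding d_def using nxpos by simp
  have Cx: "Cop A x \<in> l2" using linC x by (rule lin_opD)
  have ecx: "l2_inner x (Cop A x) = of_real nx - l2_inner x (A x)"
    unfolding Cop_def nx_def using inner_diff_right[OF x x Ax, of 1] inner_self[OF x] by simp
  have reC: "Re (l2_inner x (Cop A x)) = (1 + d) * nx"
  proof -
    have "Re (l2_inner x (Cop A x)) = nx - Re (l2_inner x (A x))" unfolding ecx by simp
    moreover have "(1 + d) * nx = nx + d * nx" by (simp add: algebra_simps)
    ultimately show ?thesis using dnx by linarith
  qed
  define q where "q = (1 + d)\<^sup>2"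
  have q1: "1 < q" unfolding q_def using one_less_power[of "1 + d" 2] dpos by simp
  have base: "q * nx \<le> nrm2 (Cop A x)"
  proof -
    have "((1 + d) * nx)\<^sup>2 \<le> (cmod (l2_inner x (Cop A x)))\<^sup>2"
      unfolding reC[symmetric] using power_mono[OF abs_Re_le_cmod[of "l2_inner x (Cop A x)"] abs_ge_zero, of 2] by simp
    also have "\<dots> \<le> nx * nrm2 (Cop A x)" unfolding nx_def using x Cx by (rule cs)
    finally have "nx * (q * nx) \<le> nx * nrm2 (Cop A x)" unfolding q_def by (simp add: power2_eq_square mult_ac)
    thus ?thesis using nxpos by simp
  qed
  have gp: "q ^ k * nx \<le> nrm2 ((Cop A ^^ k) x)" for k
    unfolding nx_def using growth_pow[OF C x _ _ base[unfolded nx_def]] nxpos q1 unfolding nx_def by simp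
  have gs: "q * nrm2 ((Cop A ^^ k) x) \<le> nrm2 ((Cop A ^^ Suc k) x)" for k
    using growth[OF C x _ _ base[unfolded nx_def]] nxpos q1 unfolding nx_def by simp
  obtain m where m: "1 / d\<^sup>2 < q ^ m" using real_arch_pow[OF q1] by blast
  define z where "z = (Cop A ^^ m) x"
  have z: "z \<in> l2" unfolding z_def using linC x by (rule pow_l2)
  have Az: "A z \<in> l2" using lin z by (rule lin_opD)
  have "(1 + d)\<^sup>2 * nrm2 z \<le> nrm2 (Cop A z)" using gs[of m] unfolding z_def q_def by simp
  hence lA: "d\<^sup>2 * nrm2 z \<le> nrm2 (A z)" using lower_A[OF sa z] dpos by simp
  have "nx < d\<^sup>2 * (q ^ m * nx)"
  proof -
    have "1 < d\<^sup>2 * q ^ m" using m dpos by (simp add: field_simps)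
    hence "1 * nx < (d\<^sup>2 * q ^ m) * nx" using nxpos by (intro mult_strict_right_mono) auto
    thus ?thesis by (simp add: mult_ac)
  qed
  also have "\<dots> \<le> d\<^sup>2 * nrm2 z" unfolding z_def using gp[of m] dpos by (intro mult_left_mono) auto
  also have "\<dots> \<le> nrm2 (A z)" by (rule lA)
  finally have big: "nx < nrm2 (A z)" .
  obtain N where N: "nx < (\<Sum>i<N. (cmod (A z i))\<^sup>2)"
  proof (rule ccontr)
    assume "\<not> thesis"
    hence "\<forall>N. (\<Sum>i<N. (cmod (A z i))\<^sup>2) \<le> nx" using that by (meson not_le)
    hence "nrm2 (A z) \<le> nx" unfolding nrm2_def using Az unfolding l2_iff by (intro suminf_le_const) auto
    thus False using big by simp
  qed
  define e where "e i = basis_vec i" for i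
  have e: "e i \<in> l2" for i unfolding e_def by (rule basis_l2)
  have Ae: "A (e i) \<in> l2" for i using lin e by (rule lin_opD)
  have cmp: "(cmod (A z i))\<^sup>2 \<le> nx * nrm2 ((Cop A ^^ m) (A (e i)))" for i
  proof -
    have "A z i = l2_inner (e i) (A z)" unfolding e_def by (simp add: inner_basis)
    also have "\<dots> = l2_inner (A (e i)) z" using sa e z by (simp add: sa_opD)
    also have "\<dots> = l2_inner ((Cop A ^^ m) (A (e i))) x"
      unfolding z_def using sa_op_pow[OF C, of m] Ae x by (simp add: sa_opD)
    also have "\<dots> = cnj (l2_inner x ((Cop A ^^ m) (A (e i))))" using x pow_l2[OF linC Ae] by (rule inner_cnj)
    finally have "cmod (A z i) = cmod (l2_inner x ((Cop A ^^ m) (A (e i))))" by simp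
    thus ?thesis unfolding nx_def using cs[OF x pow_l2[OF linC Ae]] by simp
  qed
  have "nx * 1 < nx * (\<Sum>i<N. nrm2 ((Cop A ^^ m) (A (e i))))"
  proof -
    have "nx < (\<Sum>i<N. (cmod (A z i))\<^sup>2)" by (rule N)
    also have "\<dots> \<le> (\<Sum>i<N. nx * nrm2 ((Cop A ^^ m) (A (e i))))" by (rule sum_mono) (rule cmp)
    also have "\<dots> = nx * (\<Sum>i<N. nrm2 ((Cop A ^^ m) (A (e i))))" by (simp add: sum_distrib_left)
    finally show ?thesis by simp
  qed
  hence bigsum: "1 < (\<Sum>i<N. nrm2 ((Cop A ^^ m) (A (e i))))" using nxpos by simp
  define n where "n = Suc (m + m)"
  obtain V where V: "(\<lambda>i. A ((Cop A ^^ n) (basis_vec i)) i) sums V" "0 \<le> V" using mom by blast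
  define s where "s i = Re (A (e i) i) - Re (A ((Cop A ^^ n) (e i)) i)" for i
  have term_eq: "A ((Cop A ^^ j) (A (e i))) i = l2_inner (A (e i)) ((Cop A ^^ j) (A (e i)))" for i j
  proof -
    have "A ((Cop A ^^ j) (A (e i))) i = l2_inner (e i) (A ((Cop A ^^ j) (A (e i))))"
      unfolding e_def by (simp add: inner_basis)
    also have "\<dots> = l2_inner (A (e i)) ((Cop A ^^ j) (A (e i)))"
      using sa e pow_l2[OF linC Ae] by (simp add: sa_opD)
    finally show ?thesis .
  qed
  have term_nn: "0 \<le> Re (A ((Cop A ^^ j) (A (e i))) i)" for i j
    unfolding term_eq using psd_pow[OF C psdC, of j] Ae unfolding psd_def less_eq_complex_def by auto
  have term_2m: "Re (A ((Cop A ^^ (m + m)) (A (e i))) i) = nrm2 ((Cop A ^^ m) (A (e i)))" for i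
    unfolding term_eq inner_pow_split[OF C Ae Ae] inner_self[OF pow_l2[OF linC Ae]] by simp
  have s_eq: "s i = (\<Sum>j<n. Re (A ((Cop A ^^ j) (A (e i))) i))" for i
    unfolding s_def decomp[OF lin e] by simp
  have s_ge: "nrm2 ((Cop A ^^ m) (A (e i))) \<le> s i" for i
  proof -
    have "Re (A ((Cop A ^^ (m + m)) (A (e i))) i) \<le> (\<Sum>j<n. Re (A ((Cop A ^^ j) (A (e i))) i))"
      by (rule member_le_sum) (auto simp: n_def term_nn)
    thus ?thesis unfolding s_eq term_2m .
  qed
  have s_nn: "0 \<le> s i" for i using s_ge[of i] nrm2_nonneg[OF pow_l2[OF linC Ae[of i]], of m] by linarith
  have s_sums: "s sums (1 - Re V)"
    unfolding s_def e_def using sums_diff[OF sums_Re_complex[OF tr] sums_Re_complex[OF V(1)]] by simp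
  have "(\<Sum>i<N. nrm2 ((Cop A ^^ m) (A (e i)))) \<le> (\<Sum>i<N. s i)" by (rule sum_mono) (rule s_ge)
  also have "\<dots> \<le> suminf s" using sums_summable[OF s_sums] by (rule sum_le_suminf) (auto simp: s_nn)
  also have "\<dots> = 1 - Re V" using s_sums by (simp add: sums_iff)
  also have "\<dots> \<le> 1" using V(2) by (simp add: less_eq_complex_def)
  finally show False using bigsum by simp
qed



lemma density_from:
  assumes "sa_op A" "psd A" "(\<lambda>i. A (basis_vec i) i) sums 1"
  shows "density_operator A"
  using assms unfolding density_operator_def sa_op_def lin_op_def psd_def inner_basis by auto

theorem theorem2p5:
  fixes M :: "nat \<Rightarrow> nat \<Rightarrow> complex"
  shows "represents_state M \<longleftrightarrow>
    ((\<lambda>(i, j). (cmod (M i j))\<^sup>2) summable_on UNIV \<and>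
       (\<Sum>\<^sub>\<infinity>(i, j). (cmod (M i j))\<^sup>2) \<le> 1) \<and>
    (\<forall>i j. M i j = cnj (M j i)) \<and>
    (\<forall>n::nat. \<exists>t :: nat \<Rightarrow> complex.
        (\<forall>k\<le>n. (\<lambda>i. pow_diag M (k + 1) i) sums t k) \<and>
        0 \<le> (\<Sum>k\<le>n. (-1) ^ k * of_nat (n choose k) * t k)) \<and>
    (\<lambda>i. M i i) sums 1"
proof
  assume "represents_state M"
  then obtain A where D: "density_operator A"
    and M: "\<And>i j. l2_inner (basis_vec i) (A (basis_vec j)) = M i j"
    unfolding represents_state_def by blast
  have diag: "(\<lambda>i. M i i) sums 1"
    using density_parts(3)[OF D] M[symmetric] by (simp add: inner_basis)
  show "((\<lambda>(i, j). (cmod (M i j))\<^sup>2) summable_on UNIV \<and>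
       (\<Sum>\<^sub>\<infinity>(i, j). (cmod (M i j))\<^sup>2) \<le> 1) \<and>
    (\<forall>i j. M i j = cnj (M j i)) \<and>
    (\<forall>n::nat. \<exists>t :: nat \<Rightarrow> complex.
        (\<forall>k\<le>n. (\<lambda>i. pow_diag M (k + 1) i) sums t k) \<and>
        0 \<le> (\<Sum>k\<le>n. (-1) ^ k * of_nat (n choose k) * t k)) \<and>
    (\<lambda>i. M i i) sums 1"
    using fwd_HS[OF D M] fwd_herm[OF D M] fwd_moment[OF D M] diag by blast
next
  assume H: "((\<lambda>(i, j). (cmod (M i j))\<^sup>2) summable_on UNIV \<and>
       (\<Sum>\<^sub>\<infinity>(i, j). (cmod (M i j))\<^sup>2) \<le> 1) \<and>
    (\<forall>i j. M i j = cnj (M j i)) \<and>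
    (\<forall>n::nat. \<exists>t :: nat \<Rightarrow> complex.
        (\<forall>k\<le>n. (\<lambda>i. pow_diag M (k + 1) i) sums t k) \<and>
        0 \<le> (\<Sum>k\<le>n. (-1) ^ k * of_nat (n choose k) * t k)) \<and>
    (\<lambda>i. M i i) sums 1"
  hence hs: "(\<lambda>(i, j). (cmod (M i j))\<^sup>2) summable_on UNIV"
    and le: "(\<Sum>\<^sub>\<infinity>(i, j). (cmod (M i j))\<^sup>2) \<le> 1"
    and herm: "\<forall>i j. M i j = cnj (M j i)"
    and mom: "\<And>n. \<exists>t :: nat \<Rightarrow> complex.
        (\<forall>k\<le>n. (\<lambda>i. pow_diag M (k + 1) i) sums t k) \<and>
        0 \<le> (\<Sum>k\<le>n. (-1) ^ k * of_nat (n choose k) * t k)"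
    and diag: "(\<lambda>i. M i i) sums 1"
    by blast+
  define A where "A = matrix_op M"
  have lin: "lin_op A" and bd: "bnd A" unfolding A_def using conv_basic[OF hs le] by auto
  have sa: "sa_op A" unfolding A_def using conv_sa[OF hs le herm] .
  have tr: "(\<lambda>i. A (basis_vec i) i) sums 1" unfolding A_def matrix_op_basis using diag .
  have pd: "pow_diag M k i = (A ^^ k) (basis_vec i) i" for k i
    unfolding pow_diag_def A_def inner_basis ..
  have mom': "\<exists>V. (\<lambda>i. A ((Cop A ^^ n) (basis_vec i)) i) sums V \<and> 0 \<le> V" for n
  proof -
    obtain t where t: "\<forall>k\<le>n. (\<lambda>i. pow_diag M (k + 1) i) sums t k"
      and t0: "0 \<le> (\<Sum>k\<le>n. (-1) ^ k * of_nat (n choose k) * t k)" using mom[of n] by blast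
    have "(\<lambda>i. \<Sum>k\<le>n. (-1) ^ k * of_nat (n choose k) * pow_diag M (k + 1) i) sums
        (\<Sum>k\<le>n. (-1) ^ k * of_nat (n choose k) * t k)"
      by (rule sums_sum) (rule sums_mult, use t in simp)
    moreover have "(\<Sum>k\<le>n. (-1) ^ k * of_nat (n choose k) * pow_diag M (k + 1) i) =
                   A ((Cop A ^^ n) (basis_vec i)) i" for i
      using binom_op[OF lin basis_l2, of 1 n i] by (simp add: pd)
    ultimately show ?thesis using t0 by auto
  qed
  have psdA: "psd A" by (rule pos_main[OF sa bd tr mom'])
  have D: "density_operator A" by (rule density_from[OF sa psdA tr])
  have "l2_inner (basis_vec i) (A (basis_vec j)) = M i j" for i j
    unfolding A_def inner_basis matrix_op_basis ..
  with D show "represents_state M" unfolding represents_state_def by blast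
qed


end
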